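(* For any signature $\Sigma$, $r_{A_l(\Sigma)}=\pi_l\circ r_{A_p(\Sigma)}$ as maps $\mathbf N(T(\Sigma))\to\mathbb K\langle A_l(\Sigma)\rangle$.
   Context: $\mathbb K$ is a field of characteristic zero; $[P]$ is $1$ if $P$ holds, $0$ otherwise. A signature is a set $\Sigma$ with arity map $|\cdot|:\Sigma\to\mathbb N$. A $\Sigma$-term is the leaf $\bot$ or $s(t_1,\dots,t_n)$ with $s$ of arity $n$, $t_i$ terms; degree = number of internal nodes. A $\Sigma$-forest is a finite word of terms; reduced if no term is $\bot$. $\mathbf N(T(\Sigma))$ is the vector space with basis $E_f$, $f$ reduced forests. Internal nodes of a forest $f$ are numbered $1,\dots,\deg f$ by left-to-right preorder; $d_f(i)$ decoration; $i\to^f_j i'$ means $i'$ is the $j$-th child of $i$; roots are the roots of terms. A $\Sigma$-forest-like alphabet is a set $A$ with arbitrary subset $R^A$, subsets $D^A_s$ ($s\in\Sigma$), binary relations $\to^A_j$ ($j\ge1$). $\mathbb K\langle A\rangle$: noncommutative polynomials, possibly infinite support, bounded degree. $w\in A^*$ is $A$-compatible with $f$ if it has length $\deg f$, $w(i)\in R^A$ for roots $i$, $w(i)\in D^A_{d_f(i)}$ for all $i$, and $i\to^f_j i'\Rightarrow w(i)\to^A_j w(i')$; $r_A(E_f)=\sum_{w\in A^*}[w\ A\text{-compatible with }f]\,w$. $A_p(\Sigma)=\{a^s_u:s\in\Sigma,u\in\mathbb N^*\}$ with root relation $\{a^s_{0^\ell}:\ell\in\mathbb N\}$, $D_s=\{a^s_u:u\in\mathbb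 N^*\}$, $a^s_u\to_j a^{s'}_v$ iff $v=u\,j\,0^\ell$ for some $\ell\in\mathbb N$. $A_l(\Sigma)=\{a^s_\ell:s\in\Sigma,\ell\in\mathbb N\}$ with root relation all of $A_l(\Sigma)$, $D_s=\{a^s_\ell:\ell\in\mathbb N\}$, and $a^s_\ell\to_j a^{s'}_{\ell'}$ iff $\ell<\ell'$ (for every $j\ge1$). $\pi_l:\mathbb K\langle A_p(\Sigma)\rangle\to\mathbb K\langle A_l(\Sigma)\rangle$ is the linear map sending a word $a^{s_1}_{u_1}\cdots a^{s_n}_{u_n}$ to $a^{s_1}_{|u_1|}\cdots a^{s_n}_{|u_n|}$, where $|u|$ is the length of $u$. *)

theory Defs
  imports Main
begin

datatype 's sterm = Bot | Node 's "'s sterm list"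

fun wf_term :: "'s set \<Rightarrow> ('s \<Rightarrow> nat) \<Rightarrow> 's sterm \<Rightarrow> bool" where
  "wf_term Sig ar Bot = True"
| "wf_term Sig ar (Node s ts) = (s \<in> Sig \<and> length ts = ar s \<and> (\<forall>t\<in>set ts. wf_term Sig ar t))"

type_synonym 's forest = "'s sterm list"

definition wf_forest :: "'s set \<Rightarrow> ('s \<Rightarrow> nat) \<Rightarrow> 's forest \<Rightarrow> bool" where
  "wf_forest Sig ar f = (\<forall>t\<in>set f. wf_term Sig ar t)"

definition reduced :: "'s forest \<Rightarrow> bool" where
  "reduced f = (Bot \<notin> set f)"

text \<open>Positions of internal nodes of a term in left-to-right preorder, as paths;
  children are numbered from 1.\<close>

function ipos :: "'s sterm \<Rightarrow> nat list list" where
  "ipos Bot = []"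
| "ipos (Node s ts) = [] # concat (map (\<lambda>(i, t). map ((#) (Suc i)) (ipos t)) (zip [0..<length ts] ts))"
  by pat_completeness auto
termination
  by (relation "measure size") (auto dest!: set_zip_rightD simp: less_Suc_eq_le size_list_estimation')

text \<open>Positions in a forest: first entry is the index (from 0) of the term in the word.\<close>

definition fpos :: "'s forest \<Rightarrow> nat list list" where
  "fpos f = concat (map (\<lambda>k. map ((#) k) (ipos (f ! k))) [0..<length f])"

definition deg :: "'s forest \<Rightarrow> nat" where
  "deg f = length (fpos f)"

fun label_at :: "'s sterm \<Rightarrow> nat list \<Rightarrow> 's" where
  "label_at (Node s ts) [] = s"
| "label_at (Node s ts) (j # p) = (if 1 \<le> j \<and> j \<le> length ts then label_at (ts ! (j - 1)) p else undefined)"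
| "label_at Bot p = undefined"

text \<open>Decoration d_f(i) of the i-th internal node (i counted from 0 here).\<close>
definition deco :: "'s forest \<Rightarrow> nat \<Rightarrow> 's" where
  "deco f i = label_at (f ! hd (fpos f ! i)) (tl (fpos f ! i))"

definition is_root :: "'s forest \<Rightarrow> nat \<Rightarrow> bool" where
  "is_root f i = (length (fpos f ! i) = 1)"

definition child :: "'s forest \<Rightarrow> nat \<Rightarrow> nat \<Rightarrow> nat \<Rightarrow> bool" where
  "child f j i i' = (i < deg f \<and> i' < deg f \<and> fpos f ! i' = fpos f ! i @ [j])"

text \<open>An alphabet is given by R (root set), D (decoration sets D_s) and
  E (E j a b means a \<rightarrow>_j b). Noncommutative polynomials in K<A> are
  coefficient functions on words, 'a list \<Rightarrow> 'k.\<close>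

definition compatible ::
  "'a set \<Rightarrow> ('s \<Rightarrow> 'a set) \<Rightarrow> (nat \<Rightarrow> 'a \<Rightarrow> 'a \<Rightarrow> bool) \<Rightarrow> 'a list \<Rightarrow> 's forest \<Rightarrow> bool" where
  "compatible R D E w f =
     (length w = deg f
      \<and> (\<forall>i<deg f. is_root f i \<longrightarrow> w ! i \<in> R)
      \<and> (\<forall>i<deg f. w ! i \<in> D (deco f i))
      \<and> (\<forall>i i' j. j \<ge> 1 \<longrightarrow> child f j i i' \<longrightarrow> E j (w ! i) (w ! i')))"

definition rA ::
  "'a set \<Rightarrow> ('s \<Rightarrow> 'a set) \<Rightarrow> (nat \<Rightarrow> 'a \<Rightarrow> 'a \<Rightarrow> bool) \<Rightarrow> 's forest \<Rightarrow> 'a list \<Rightarrow> 'k::field_char_0" where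
  "rA R D E f = (\<lambda>w. if compatible R D E w f then 1 else 0)"

text \<open>Elements of N(T(Sigma)): finitely supported coefficient functions on
  well-formed reduced forests; r_A is extended linearly.\<close>

definition inN :: "'s set \<Rightarrow> ('s \<Rightarrow> nat) \<Rightarrow> ('s forest \<Rightarrow> 'k::field_char_0) \<Rightarrow> bool" where
  "inN Sig ar x = (finite {f. x f \<noteq> 0} \<and> (\<forall>f. x f \<noteq> 0 \<longrightarrow> wf_forest Sig ar f \<and> reduced f))"

definition rA_lin ::
  "'a set \<Rightarrow> ('s \<Rightarrow> 'a set) \<Rightarrow> (nat \<Rightarrow> 'a \<Rightarrow> 'a \<Rightarrow> bool) \<Rightarrow> ('s forest \<Rightarrow> 'k::field_char_0) \<Rightarrow> 'a list \<Rightarrow> 'k" where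
  "rA_lin R D E x = (\<lambda>w. \<Sum>f\<in>{f. x f \<noteq> 0}. x f * rA R D E f w)"

definition Ap_R :: "'s set \<Rightarrow> ('s \<times> nat list) set" where
  "Ap_R Sig = {(s, replicate l 0) | s l. s \<in> Sig}"
definition Ap_D :: "'s \<Rightarrow> ('s \<times> nat list) set" where
  "Ap_D s = {(s, u) | u. True}"
definition Ap_E :: "nat \<Rightarrow> ('s \<times> nat list) \<Rightarrow> ('s \<times> nat list) \<Rightarrow> bool" where
  "Ap_E j a b = (\<exists>l. snd b = snd a @ [j] @ replicate l 0)"

definition Al_R :: "'s set \<Rightarrow> ('s \<times> nat) set" where
  "Al_R Sig = Sig \<times> UNIV"
definition Al_D :: "'s \<Rightarrow> ('s \<times> nat) set" where
  "Al_D s = {(s, l) | l. True}"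
definition Al_E :: "nat \<Rightarrow> ('s \<times> nat) \<Rightarrow> ('s \<times> nat) \<Rightarrow> bool" where
  "Al_E j a b = (snd a < snd b)"

definition pi_word :: "('s \<times> nat list) list \<Rightarrow> ('s \<times> nat) list" where
  "pi_word w = map (\<lambda>(s, u). (s, length u)) w"

text \<open>Linear map pi_l: coefficient of v is the sum of the coefficients of all
  words mapped to v (a finite sum wherever pi_l is meaningful).\<close>
definition pi_l :: "(('s \<times> nat list) list \<Rightarrow> 'k::field_char_0) \<Rightarrow> ('s \<times> nat) list \<Rightarrow> 'k" where
  "pi_l P = (\<lambda>v. \<Sum>w\<in>{w. pi_word w = v \<and> P w \<noteq> 0}. P w)"

end

theory Submission
  imports Defs
begin


lemma distinct_concat_cons:
  assumes "distinct ks" "inj_on c (set ks)" "\<And>k. k \<in> set ks \<Longrightarrow> distinct (g k)"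
  shows "distinct (concat (map (\<lambda>k. map ((#) (c k)) (g k)) ks))"
  using assms
proof (induction ks)
  case Nil then show ?case by simp
next
  case (Cons a ks)
  have "set (map ((#) (c a)) (g a)) \<inter> set (concat (map (\<lambda>k. map ((#) (c k)) (g k)) ks)) = {}"
    using Cons.prems(1,2) by (auto simp: inj_on_def)
  moreover have "distinct (map ((#) (c a)) (g a))" using Cons.prems(3) by (simp add: distinct_map)
  moreover have "inj_on c (set ks)" using Cons.prems(2) by (auto simp: inj_on_def)
  ultimately show ?case using Cons by simp
qed

lemma ipos_Node: "ipos (Node s ts) = [] # concat (map (\<lambda>i. map ((#) (Suc i)) (ipos (ts ! i))) [0..<length ts])"
proof -
  have "map (\<lambda>(i, t). map ((#) (Suc i)) (ipos t)) (zip [0..<length ts] ts)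
      = map (\<lambda>i. map ((#) (Suc i)) (ipos (ts ! i))) [0..<length ts]"
    by (rule nth_equalityI) auto
  then show ?thesis by simp
qed

lemma ipos_distinct: "distinct (ipos t)"
proof (induction t rule: ipos.induct)
  case 1 then show ?case by simp
next
  case (2 s ts)
  have "distinct (concat (map (\<lambda>i. map ((#) (Suc i)) (ipos (ts ! i))) [0..<length ts]))"
  proof (rule distinct_concat_cons)
    fix i assume "i \<in> set [0..<length ts]"
    then have "(i, ts ! i) \<in> set (zip [0..<length ts] ts)" by (auto simp: set_zip intro!: exI[of _ i])
    then show "distinct (ipos (ts ! i))" using 2 by blast
  qed auto
  then show ?case by (auto simp add: ipos_Node simp del: ipos.simps)
qed

lemma ipos_prefix: "q @ [j] \<in> set (ipos t) \<Longrightarrow> q \<in> set (ipos t) \<and> j \<ge> 1"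
proof (induction t arbitrary: q rule: ipos.induct)
  case 1 then show ?case by simp
next
  case (2 s ts)
  from 2(2) obtain i where i: "i < length ts" "q @ [j] \<in> (#) (Suc i) ` set (ipos (ts ! i))"
    by (auto simp add: ipos_Node simp del: ipos.simps)
  then obtain p where p: "q @ [j] = Suc i # p" "p \<in> set (ipos (ts ! i))" by auto
  show ?case
  proof (cases q)
    case Nil then show ?thesis using p by simp
  next
    case (Cons a q')
    with p have "a = Suc i" "q' @ [j] = p" by auto
    moreover have "(i, ts ! i) \<in> set (zip [0..<length ts] ts)" using i(1) by (auto simp: set_zip intro!: exI[of _ i])
    ultimately have "q' \<in> set (ipos (ts ! i)) \<and> 1 \<le> j" using 2(1) p(2) by blast
    then show ?thesis using Cons \<open>a = Suc i\<close> i(1) by (auto simp add: ipos_Node simp del: ipos.simps)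
  qed
qed

lemma fpos_set: "p \<in> set (fpos f) \<longleftrightarrow> (\<exists>k q. k < length f \<and> p = k # q \<and> q \<in> set (ipos (f ! k)))"
  by (auto simp: fpos_def)

lemma fpos_distinct: "distinct (fpos f)"
  unfolding fpos_def by (rule distinct_concat_cons) (auto simp: ipos_distinct)

lemma fpos_nonempty: "p \<in> set (fpos f) \<Longrightarrow> p \<noteq> []"
  by (auto simp: fpos_set)

lemma fpos_prefix: "q @ [j] \<in> set (fpos f) \<Longrightarrow> q \<noteq> [] \<Longrightarrow> q \<in> set (fpos f) \<and> j \<ge> 1"
proof -
  assume a: "q @ [j] \<in> set (fpos f)" "q \<noteq> []"
  then obtain k q' where "q = k # q'" by (cases q) auto
  with a show ?thesis using ipos_prefix[of q' j] by (auto simp: fpos_set)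
qed



abbreviation "cp Sig w f \<equiv> compatible (Ap_R Sig) Ap_D Ap_E w f"
abbreviation "cl Sig v f \<equiv> compatible (Al_R Sig) Al_D Al_E v f"

lemma parent_exists:
  assumes "i < deg f" "length (fpos f ! i) \<noteq> 1"
  shows "\<exists>i0 j. i0 < deg f \<and> j \<ge> 1 \<and> fpos f ! i = fpos f ! i0 @ [j]
     \<and> length (fpos f ! i0) < length (fpos f ! i)"
proof -
  let ?p = "fpos f ! i"
  have pin: "?p \<in> set (fpos f)" using assms(1) by (simp add: deg_def)
  then have "?p \<noteq> []" by (rule fpos_nonempty)
  then have eq: "?p = butlast ?p @ [last ?p]" by simp
  have "butlast ?p \<noteq> []" using assms(2) \<open>?p \<noteq> []\<close>
    by (metis One_nat_def eq length_append_singleton list.size(3))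
  with pin eq fpos_prefix[of "butlast ?p" "last ?p" f]
  have "butlast ?p \<in> set (fpos f)" "last ?p \<ge> 1" by metis+
  then obtain i0 where "i0 < deg f" "fpos f ! i0 = butlast ?p" by (auto simp: deg_def in_set_conv_nth)
  then show ?thesis using \<open>last ?p \<ge> 1\<close> eq \<open>?p \<noteq> []\<close>
    by (intro exI[of _ i0] exI[of _ "last ?p"]) (auto)
qed

lemma cp_cl: assumes "cp Sig w f" shows "cl Sig (pi_word w) f"
proof -
  have l: "length w = deg f" using assms by (simp add: compatible_def)
  have pw: "pi_word w ! i = (fst (w ! i), length (snd (w ! i)))" if "i < deg f" for i
    using that l by (simp add: pi_word_def split: prod.splits)
  show ?thesis unfolding compatible_def
  proof (intro conjI allI impI)
    show "length (pi_word w) = deg f" using l by (simp add: pi_word_def)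
  next
    fix i assume "i < deg f" "is_root f i"
    then show "pi_word w ! i \<in> Al_R Sig" using assms pw by (auto simp: compatible_def Ap_R_def Al_R_def)
  next
    fix i assume "i < deg f"
    then show "pi_word w ! i \<in> Al_D (deco f i)" using assms pw by (auto simp: compatible_def Ap_D_def Al_D_def)
  next
    fix i i' j assume "1 \<le> j" "child f j i i'"
    moreover then have "i < deg f" "i' < deg f" by (auto simp: child_def)
    ultimately show "Al_E j (pi_word w ! i) (pi_word w ! i')" using assms pw
      by (force simp: compatible_def Ap_E_def Al_E_def)
  qed
qed

lemma cp_unique:
  assumes "cp Sig w f" "cp Sig w' f" "pi_word w = pi_word w'"
  shows "w = w'"
proof -
  have len: "length w = deg f" "length w' = deg f" using assms by (auto simp: compatible_def)
  have fst: "fst (w ! i) = fst (w' ! i)" if "i < deg f" for i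
  proof -
    have "w ! i \<in> Ap_D (deco f i)" "w' ! i \<in> Ap_D (deco f i)" using assms(1,2) that by (auto simp: compatible_def)
    then show ?thesis by (auto simp: Ap_D_def)
  qed
  have sl: "length (snd (w ! i)) = length (snd (w' ! i))" if "i < deg f" for i
  proof -
    have "pi_word w ! i = pi_word w' ! i" using assms(3) by simp
    then show ?thesis using that len by (auto simp: pi_word_def split: prod.splits)
  qed
  have "i < deg f \<Longrightarrow> snd (w ! i) = snd (w' ! i)" for i
  proof (induction "length (fpos f ! i)" arbitrary: i rule: less_induct)
    case less
    show ?case
    proof (cases "length (fpos f ! i) = 1")
      case True
      then have "is_root f i" by (simp add: is_root_def)
      then have "w ! i \<in> Ap_R Sig" "w' ! i \<in> Ap_R Sig" using assms(1,2) less.prems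
        by (auto simp: compatible_def)
      then show ?thesis using sl[OF less.prems] by (auto simp: Ap_R_def)
    next
      case False
      then obtain i0 j where p: "i0 < deg f" "j \<ge> 1" "fpos f ! i = fpos f ! i0 @ [j]"
        "length (fpos f ! i0) < length (fpos f ! i)"
        using parent_exists[OF less.prems] by blast
      have ch: "child f j i0 i" using p less.prems by (simp add: child_def)
      have ih: "snd (w ! i0) = snd (w' ! i0)" using less.hyps[OF p(4) p(1)] .
      obtain l where l: "snd (w ! i) = snd (w ! i0) @ [j] @ replicate l 0"
        using assms(1) ch p(2) unfolding compatible_def Ap_E_def by blast
      obtain l' where l': "snd (w' ! i) = snd (w' ! i0) @ [j] @ replicate l' 0"
        using assms(2) ch p(2) unfolding compatible_def Ap_E_def by blast
      have "l = l'" using sl[OF less.prems] l l' ih by simp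
      then show ?thesis using l l' ih by simp
    qed
  qed
  then show ?thesis using len fst by (auto intro!: nth_equalityI prod_eqI)
qed

function U :: "(nat list \<Rightarrow> nat) \<Rightarrow> nat list \<Rightarrow> nat list" where
  "U L p = (if length p \<le> 1 then replicate (L p) 0
     else U L (butlast p) @ [last p] @ replicate (L p - L (butlast p) - 1) 0)"
  by pat_completeness auto
termination by (relation "measure (\<lambda>(L, p). length p)") auto

declare U.simps[simp del]

lemma cl_cp:
  assumes "cl Sig v f"
  shows "\<exists>w. cp Sig w f \<and> pi_word w = v"
proof -
  define P where "P = fpos f"
  have dP: "distinct P" by (simp add: P_def fpos_distinct)
  have lenv: "length v = length P" using assms by (simp add: compatible_def P_def deg_def)
  define idx where "idx p = (THE i. i < length P \<and> P ! i = p)" for p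
  have idx: "idx (P ! i) = i" if "i < length P" for i
    unfolding idx_def using that dP by (auto simp: nth_eq_iff_index_eq)
  define L where "L p = snd (v ! idx p)" for p
  have LP: "L (P ! i) = snd (v ! i)" if "i < length P" for i using idx[OF that] by (simp add: L_def)
  have lenU: "length (U L (P ! i)) = L (P ! i)" if "i < length P" for i
    using that
  proof (induction "length (P ! i)" arbitrary: i rule: less_induct)
    case less
    show ?case
    proof (cases "length (P ! i) = 1")
      case True then show ?thesis by (simp add: U.simps)
    next
      case False
      then obtain i0 j where p: "i0 < length P" "j \<ge> 1" "P ! i = P ! i0 @ [j]"
        "length (P ! i0) < length (P ! i)"
        using parent_exists[of i f] less.prems by (auto simp: P_def deg_def)
      have ch: "child f j i0 i" using p less.prems by (simp add: child_def P_def deg_def)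
      then have "snd (v ! i0) < snd (v ! i)" using assms p(2) by (auto simp: compatible_def Al_E_def)
      moreover have "length (P ! i0) \<noteq> 0" using p(1) fpos_nonempty[of "P ! i0" f]
        by (auto simp: P_def)
      ultimately show ?thesis using less.hyps[OF p(4) p(1)] p(3) LP[OF p(1)] LP[OF less.prems]
        by (simp add: U.simps[of L "P ! i0 @ [j]"])
    qed
  qed
  define w where "w = map (\<lambda>i. (fst (v ! i), U L (P ! i))) [0..<length P]"
  have lw: "length w = deg f" by (simp add: w_def P_def deg_def)
  have pw: "pi_word w = v"
    using lenv lenU LP by (auto simp: w_def pi_word_def intro!: nth_equalityI)
  have "cp Sig w f"
    unfolding compatible_def
  proof (intro conjI allI impI)
    show "length w = deg f" by (rule lw)
  next
    fix i assume i: "i < deg f" "is_root f i"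
    then have "fst (v ! i) \<in> Sig" using assms by (auto simp: compatible_def Al_R_def)
    then show "w ! i \<in> Ap_R Sig" using i
      by (auto simp: w_def P_def deg_def is_root_def Ap_R_def U.simps)
  next
    fix i assume i: "i < deg f"
    then show "w ! i \<in> Ap_D (deco f i)" using assms
      by (auto simp: w_def P_def deg_def Ap_D_def compatible_def Al_D_def)
  next
    fix i i' j assume j: "1 \<le> j" and ch: "child f j i i'"
    then have c: "i < length P" "i' < length P" "P ! i' = P ! i @ [j]"
      by (auto simp: child_def P_def deg_def)
    have "P ! i \<noteq> []" using c(1) fpos_nonempty[of "P ! i" f] by (auto simp: P_def)
    then have "U L (P ! i') = U L (P ! i) @ [j] @ replicate (L (P ! i') - L (P ! i) - 1) 0"
      using c(3) by (simp add: U.simps[of L "P ! i @ [j]"])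
    then show "Ap_E j (w ! i) (w ! i')" using c by (auto simp: w_def Ap_E_def)
  qed
  then show ?thesis using pw by blast
qed



lemma fiber:
  "{w. pi_word w = v \<and> cp Sig w f} = (if cl Sig v f then {SOME w. pi_word w = v \<and> cp Sig w f} else {})"
proof (cases "cl Sig v f")
  case True
  then obtain w0 where w0: "cp Sig w0 f" "pi_word w0 = v" using cl_cp by blast
  define c where "c = (SOME w. pi_word w = v \<and> cp Sig w f)"
  have c: "pi_word c = v \<and> cp Sig c f" unfolding c_def
    by (rule someI[of _ w0]) (simp add: w0)
  have "{w. pi_word w = v \<and> cp Sig w f} = {c}"
  proof (rule set_eqI, rule iffI)
    fix w assume "w \<in> {w. pi_word w = v \<and> cp Sig w f}"
    then have "pi_word w = v" "cp Sig w f" by auto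
    then have "w = c" using c cp_unique[of Sig w f c] by simp
    then show "w \<in> {c}" by simp
  next
    fix w assume "w \<in> {c}" then show "w \<in> {w. pi_word w = v \<and> cp Sig w f}" using c by simp
  qed
  then show ?thesis using True by (simp add: c_def)
next
  case False
  have "{w. pi_word w = v \<and> cp Sig w f} = {}"
  proof (rule equals0I)
    fix w assume "w \<in> {w. pi_word w = v \<and> cp Sig w f}"
    then have "pi_word w = v" "cp Sig w f" by auto
    then show False using cp_cl[of Sig w f] False by simp
  qed
  then show ?thesis using False by simp
qed

theorem proposition4p10:
  fixes Sig :: "'s set" and ar :: "'s \<Rightarrow> nat" and x :: "'s forest \<Rightarrow> 'k::field_char_0"
  assumes "inN Sig ar x"
  shows "rA_lin (Al_R Sig) Al_D Al_E x = pi_l (rA_lin (Ap_R Sig) Ap_D Ap_E x)"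
proof
  fix v :: "('s \<times> nat) list"
  define S where "S = {f. x f \<noteq> 0}"
  have fS: "finite S" using assms by (simp add: inN_def S_def)
  define Q where "Q = rA_lin (Ap_R Sig) Ap_D Ap_E x"
  have Q: "Q w = (\<Sum>f\<in>S. x f * (if cp Sig w f then 1 else 0))" for w
    by (simp add: Q_def rA_lin_def rA_def S_def)
  define B where "B f = {w. pi_word w = v \<and> cp Sig w f}" for f
  have fB: "finite (B f)" for f unfolding B_def by (subst fiber) simp
  define T where "T = (\<Union>f\<in>S. B f)"
  have fT: "finite T" using fS fB by (simp add: T_def)
  have sub: "{w. pi_word w = v \<and> Q w \<noteq> 0} \<subseteq> T"
  proof
    fix w assume "w \<in> {w. pi_word w = v \<and> Q w \<noteq> 0}"
    then have "pi_word w = v" "Q w \<noteq> 0" by auto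
    have "\<exists>f\<in>S. cp Sig w f"
    proof (rule ccontr)
      assume "\<not> (\<exists>f\<in>S. cp Sig w f)"
      then have "Q w = 0" unfolding Q by (intro sum.neutral) auto
      then show False using \<open>Q w \<noteq> 0\<close> by simp
    qed
    then obtain f where "f \<in> S" "cp Sig w f" by blast
    then show "w \<in> T" using \<open>pi_word w = v\<close> by (auto simp: T_def B_def)
  qed
  have "pi_l Q v = (\<Sum>w\<in>T. Q w)"
    unfolding pi_l_def by (rule sum.mono_neutral_left[OF fT sub]) (auto simp: T_def B_def)
  also have "\<dots> = (\<Sum>f\<in>S. x f * (\<Sum>w\<in>T. (if cp Sig w f then 1 else 0)))"
  proof -
    have "(\<Sum>w\<in>T. Q w) = (\<Sum>w\<in>T. \<Sum>f\<in>S. x f * (if cp Sig w f then 1 else 0))"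
      by (rule sum.cong[OF refl]) (rule Q)
    also have "\<dots> = (\<Sum>f\<in>S. \<Sum>w\<in>T. x f * (if cp Sig w f then 1 else 0))"
      by (rule sum.swap)
    also have "\<dots> = (\<Sum>f\<in>S. x f * (\<Sum>w\<in>T. (if cp Sig w f then 1 else 0)))"
      by (simp only: sum_distrib_left)
    finally show ?thesis .
  qed
  also have "\<dots> = (\<Sum>f\<in>S. x f * (if cl Sig v f then 1 else 0))"
  proof (rule sum.cong[OF refl])
    fix f assume f: "f \<in> S"
    have "(\<Sum>w\<in>T. (if cp Sig w f then 1 else 0) :: 'k) = (\<Sum>w\<in>{w\<in>T. cp Sig w f}. 1)"
      by (rule sum.inter_filter[OF fT, symmetric])
    also have "{w\<in>T. cp Sig w f} = B f" using f by (auto simp: T_def B_def)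
    also have "(\<Sum>w\<in>B f. (1::'k)) = (if cl Sig v f then 1 else 0)"
      unfolding B_def by (subst fiber) simp
    finally show "x f * (\<Sum>w\<in>T. (if cp Sig w f then 1 else 0)) = x f * (if cl Sig v f then 1 else 0)"
      by simp
  qed
  also have "\<dots> = rA_lin (Al_R Sig) Al_D Al_E x v"
    by (simp add: rA_lin_def rA_def S_def)
  finally show "rA_lin (Al_R Sig) Al_D Al_E x v = pi_l (rA_lin (Ap_R Sig) Ap_D Ap_E x) v"
    by (simp add: Q_def)
qed

end
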